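(* Let $J\in\mathbb{R}^{3\times3}$ be symmetric positive definite and let $R_d\in\mathsf{SO(3)}$ be constant (so $\Omega_d\equiv0$ and $e_\Omega=\Omega$). Let $k_R,k_\Omega>0$ and define the control $$u'=-k_Re_R-k_\Omega e_\Omega,$$ which does not depend on $J$. Consider the closed-loop system $J\dot\Omega+\Omega\times J\Omega=u'$, $\dot R=R\hat\Omega$. If the initial condition satisfies $$\Psi(R(0),R_d)<2,\qquad \|\Omega(0)\|^2<\frac{2k_R}{\lambda_{\max}(J)}\big(2-\Psi(R(0),R_d)\big),$$ then $\Psi(R(t),R_d)<2$ for all $t\ge0$, and the zero equilibrium $(e_R,e_\Omega)=(0,0)$ is exponentially stable with this set contained in its region of attraction: there exist constants $C,\beta>0$ (depending on $J,k_R,k_\Omega$) such that $$\|e_R(t)\|^2+\|e_\Omega(t)\|^2\le C\big(\|e_R(0)\|^2+\|e_\Omega(0)\|^2\big)e^{-\beta t}\quad\text{for all }t\ge0.$$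
   Context: $\mathsf{SO(3)}$ is the group of $3\times3$ rotation matrices; $\hat x$ denotes the skew-symmetric matrix with $\hat x y=x\times y$, and $\vee$ is its inverse. $\Psi(R,R_d)=2-\sqrt{1+\mathrm{tr}(R_d^TR)}$, $e_R=\frac{1}{2\sqrt{1+\mathrm{tr}(R_d^TR)}}(R_d^TR-R^TR_d)^\vee$ (defined when $\Psi<2$), and $e_\Omega=\Omega-R^TR_d\Omega_d$, which equals $\Omega$ here. $\lambda_{\max}(J)$ is the largest eigenvalue of $J$. *)

theory Defs
  imports "HOL-Analysis.Analysis"
begin

definition SO3 :: "(real^3^3) set" where
  "SO3 = {R. transpose R ** R = mat 1 \<and> det R = 1}"

text \<open>hat map: hat x *v y = x cross y.\<close>
definition hat :: "real^3 \<Rightarrow> real^3^3" where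
  "hat x = vector [vector [0, - x$3, x$2],
                   vector [x$3, 0, - x$1],
                   vector [- x$2, x$1, 0]]"

text \<open>vee map, inverse of hat on skew-symmetric matrices.\<close>
definition vee :: "real^3^3 \<Rightarrow> real^3" where
  "vee M = vector [M$3$2, M$1$3, M$2$1]"

definition Psi :: "real^3^3 \<Rightarrow> real^3^3 \<Rightarrow> real" where
  "Psi R Rd = 2 - sqrt (1 + trace (transpose Rd ** R))"

definition eR :: "real^3^3 \<Rightarrow> real^3^3 \<Rightarrow> real^3" where
  "eR R Rd = (1 / (2 * sqrt (1 + trace (transpose Rd ** R))))
              *\<^sub>R vee (transpose Rd ** R - transpose R ** Rd)"

definition eOmega :: "real^3^3 \<Rightarrow> real^3^3 \<Rightarrow> real^3 \<Rightarrow> real^3 \<Rightarrow> real^3" where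
  "eOmega R Rd \<Omega> \<Omega>d = \<Omega> - (transpose R ** Rd) *v \<Omega>d"

definition sym_posdef :: "real^3^3 \<Rightarrow> bool" where
  "sym_posdef J \<longleftrightarrow> transpose J = J \<and> (\<forall>x. x \<noteq> 0 \<longrightarrow> x \<bullet> (J *v x) > 0)"

definition lambda_max :: "real^3^3 \<Rightarrow> real" where
  "lambda_max J = Max {l. \<exists>v. v \<noteq> 0 \<and> J *v v = l *\<^sub>R v}"

end

theory Submission
  imports Defs
begin

lemmas cs = matrix_matrix_mult_def matrix_vector_mult_def transpose_def trace_def sum_3
  vee_def hat_def cross3_def inner_vec_def vec_eq_iff forall_3 mat_def

definition AA :: "real^3^3 \<Rightarrow> real^3" where "AA Q = vee (Q - transpose Q)"

lemma L3: "trace (Q ** hat x) = - (AA Q \<bullet> x)"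
  by (simp add: cs AA_def algebra_simps)

lemma L4: "vee (Q ** hat x - transpose (Q ** hat x)) = trace Q *\<^sub>R x - transpose Q *v x"
  by (simp add: cs algebra_simps)

lemma L5: "(Q - transpose Q) *v x = cross3 (AA Q) x"
  by (simp add: cs AA_def algebra_simps)

lemma cofcol:
  fixes a b c d e f g h i :: real
  assumes "a*a+d*d+g*g=1" "b*b+e*e+h*h=1" "c*c+f*f+i*i=1"
   "b*c+e*f+h*i=0"
   "a*(e*i - f*h) + d*(h*c - b*i) + g*(b*f - e*c) = 1"
  shows "a = e*i - f*h \<and> d = h*c - b*i \<and> g = b*f - e*c"
proof -
  have "(a-(e*i - f*h))^2+(d-(h*c - b*i))^2+(g-(b*f - e*c))^2 = (a*a+d*d+g*g) - 2*(a*(e*i - f*h) + d*(h*c - b*i) + g*(b*f - e*c)) + ((b*b+e*e+h*h)*(c*c+f*f+i*i) - (b*c+e*f+h*i)^2)"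
    by algebra
  also have "\<dots> = 0" using assms by simp
  finally have z: "(a-(e*i - f*h))^2+(d-(h*c - b*i))^2+(g-(b*f - e*c))^2 = 0" .
  have "(a-(e*i - f*h))^2 = 0" "(d-(h*c - b*i))^2 = 0" "(g-(b*f - e*c))^2 = 0"
    using z by (smt (z3) zero_le_power2)+
  then show ?thesis by simp
qed

lemma so3_scalar:
  fixes a b c d e f g h i :: real
  assumes o: "a*a+d*d+g*g=1" "b*b+e*e+h*h=1" "c*c+f*f+i*i=1"
   "b*c+e*f+h*i=0" "a*c+d*f+g*i=0" "a*b+d*e+g*h=0"
   and det: "a*e*i + b*f*g + c*d*h - a*f*h - b*d*i - c*e*g = 1"
  shows "(h-f)^2+(c-g)^2+(d-b)^2 = (1+a+e+i)*(3-(a+e+i))"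
   "(h-f)*(h-f) = (1+a+e+i)*(2*a-(a+e+i)+1)"
   "(c-g)*(c-g) = (1+a+e+i)*(2*e-(a+e+i)+1)"
   "(d-b)*(d-b) = (1+a+e+i)*(2*i-(a+e+i)+1)"
   "(h-f)*(c-g) = (1+a+e+i)*(b+d)"
   "(h-f)*(d-b) = (1+a+e+i)*(c+g)"
   "(c-g)*(d-b) = (1+a+e+i)*(f+h)"
   "a+e+i \<le> 3"
proof -
  have c1: "a = e*i - f*h \<and> d = h*c - b*i \<and> g = b*f - e*c"
    by (rule cofcol) (use o det in \<open>simp_all add: algebra_simps\<close>)
  have c2: "b = f*g - d*i \<and> e = i*a - c*g \<and> h = c*d - f*a"
    by (rule cofcol) (use o det in \<open>simp_all add: algebra_simps\<close>)
  have c3': "c = d*h - g*e \<and> f = g*b - a*h \<and> i = a*e - d*b"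
    using cofcol[where a=c and b=a and c=b and d=f and e=d and f=e and g=i and h=g and i=h] o det by (simp add: algebra_simps)
  then have c3: "c = d*h - e*g \<and> f = g*b - a*h \<and> i = a*e - b*d" by (simp add: algebra_simps)
  show "(h-f)^2+(c-g)^2+(d-b)^2 = (1+a+e+i)*(3-(a+e+i))"
   "(h-f)*(h-f) = (1+a+e+i)*(2*a-(a+e+i)+1)"
   "(c-g)*(c-g) = (1+a+e+i)*(2*e-(a+e+i)+1)"
   "(d-b)*(d-b) = (1+a+e+i)*(2*i-(a+e+i)+1)"
   "(h-f)*(c-g) = (1+a+e+i)*(b+d)"
   "(h-f)*(d-b) = (1+a+e+i)*(c+g)"
   "(c-g)*(d-b) = (1+a+e+i)*(f+h)"
    using o c1 c2 c3 by algebra+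
  have "a \<le> 1" "e \<le> 1" "i \<le> 1"
    using o by (smt (z3) zero_le_square mult_le_cancel_left1)+
  then show "a+e+i \<le> 3" by simp
qed

lemma SO3_facts:
  assumes "Q \<in> SO3"
  shows "Q$1$1*Q$1$1+Q$2$1*Q$2$1+Q$3$1*Q$3$1=1" "Q$1$2*Q$1$2+Q$2$2*Q$2$2+Q$3$2*Q$3$2=1"
    "Q$1$3*Q$1$3+Q$2$3*Q$2$3+Q$3$3*Q$3$3=1"
   "Q$1$2*Q$1$3+Q$2$2*Q$2$3+Q$3$2*Q$3$3=0" "Q$1$1*Q$1$3+Q$2$1*Q$2$3+Q$3$1*Q$3$3=0"
   "Q$1$1*Q$1$2+Q$2$1*Q$2$2+Q$3$1*Q$3$2=0"
   "Q$1$1*Q$2$2*Q$3$3 + Q$1$2*Q$2$3*Q$3$1 + Q$1$3*Q$2$1*Q$3$2 - Q$1$1*Q$2$3*Q$3$2 - Q$1$2*Q$2$1*Q$3$3 - Q$1$3*Q$2$2*Q$3$1 = 1"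
proof -
  have m: "transpose Q ** Q = mat 1" and d: "det Q = 1" using assms by (auto simp: SO3_def)
  from m have e: "\<And>i j. (transpose Q ** Q)$i$j = (mat 1 :: real^3^3)$i$j" by simp
  note ss = matrix_matrix_mult_def transpose_def sum_3 mat_def
  show "Q$1$1*Q$1$1+Q$2$1*Q$2$1+Q$3$1*Q$3$1=1" using e[of 1 1] by (simp add: ss)
  show "Q$1$2*Q$1$2+Q$2$2*Q$2$2+Q$3$2*Q$3$2=1" using e[of 2 2] by (simp add: ss)
  show "Q$1$3*Q$1$3+Q$2$3*Q$2$3+Q$3$3*Q$3$3=1" using e[of 3 3] by (simp add: ss)
  show "Q$1$2*Q$1$3+Q$2$2*Q$2$3+Q$3$2*Q$3$3=0" using e[of 2 3] by (simp add: ss)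
  show "Q$1$1*Q$1$3+Q$2$1*Q$2$3+Q$3$1*Q$3$3=0" using e[of 1 3] by (simp add: ss)
  show "Q$1$1*Q$1$2+Q$2$1*Q$2$2+Q$3$1*Q$3$2=0" using e[of 1 2] by (simp add: ss)
  show "Q$1$1*Q$2$2*Q$3$3 + Q$1$2*Q$2$3*Q$3$1 + Q$1$3*Q$2$1*Q$3$2 - Q$1$1*Q$2$3*Q$3$2 - Q$1$2*Q$2$1*Q$3$3 - Q$1$3*Q$2$2*Q$3$1 = 1"
    using d by (simp add: det_3)
qed

lemma SO3_L1:
  assumes "Q \<in> SO3"
  shows "(norm (AA Q))^2 = (1 + trace Q) * (3 - trace Q)" "trace Q \<le> 3"
proof -
  note F = SO3_facts[OF assms]
  note S = so3_scalar[where a="Q$1$1" and b="Q$1$2" and c="Q$1$3" and d="Q$2$1" and e="Q$2$2"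
     and f="Q$2$3" and g="Q$3$1" and h="Q$3$2" and i="Q$3$3", OF F(1-6)]
  have S': "(Q$3$2-Q$2$3)^2+(Q$1$3-Q$3$1)^2+(Q$2$1-Q$1$2)^2 = (1+Q$1$1+Q$2$2+Q$3$3)*(3-(Q$1$1+Q$2$2+Q$3$3))"
    "Q$1$1+Q$2$2+Q$3$3 \<le> 3"
    using S F(7) by (simp_all add: algebra_simps)
  show "(norm (AA Q))^2 = (1 + trace Q) * (3 - trace Q)"
  proof -
    have "(norm (AA Q))^2 = AA Q \<bullet> AA Q" by (simp add: power2_norm_eq_inner)
    also have "\<dots> = (Q$3$2-Q$2$3)^2+(Q$1$3-Q$3$1)^2+(Q$2$1-Q$1$2)^2"
      by (simp add: AA_def cs power2_eq_square)
    finally show ?thesis using S'(1) by (simp add: trace_def sum_3 algebra_simps)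
  qed
  show "trace Q \<le> 3" using S'(2) by (simp add: trace_def sum_3)
qed

lemma l2s:
  fixes A1 A2 A3 x1 x2 x3 a e i p q r tt :: real
  assumes "A1*A1 = tt*(2*a-(a+e+i)+1)" "A1*A2 = tt*p" "A1*A3 = tt*q" "tt = 1+a+e+i"
  shows "(A1*x1 + A2*x2 + A3*x3)*A1 = tt*(2*a*x1 + p*x2 + q*x3 - (tt-2)*x1)"
proof -
  have "(A1*x1 + A2*x2 + A3*x3)*A1 = x1*(A1*A1) + x2*(A1*A2) + x3*(A1*A3)" by (simp add: algebra_simps)
  also have "\<dots> = x1*(tt*(2*a-(a+e+i)+1)) + x2*(tt*p) + x3*(tt*q)" using assms by simp
  finally show ?thesis using assms(4) by (simp add: algebra_simps)
qed

lemma SO3_L2: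
  assumes "Q \<in> SO3"
  shows "(AA Q \<bullet> x) *\<^sub>R AA Q = (1 + trace Q) *\<^sub>R ((Q + transpose Q) *v x - (trace Q - 1) *\<^sub>R x)"
proof -
  note F = SO3_facts[OF assms]
  note S = so3_scalar[where a="Q$1$1" and b="Q$1$2" and c="Q$1$3" and d="Q$2$1" and e="Q$2$2"
     and f="Q$2$3" and g="Q$3$1" and h="Q$3$2" and i="Q$3$3", OF F(1-6)]
  have S': "(Q$3$2-Q$2$3)*(Q$3$2-Q$2$3) = (1+Q$1$1+Q$2$2+Q$3$3)*(2*Q$1$1-(Q$1$1+Q$2$2+Q$3$3)+1)"
   "(Q$1$3-Q$3$1)*(Q$1$3-Q$3$1) = (1+Q$1$1+Q$2$2+Q$3$3)*(2*Q$2$2-(Q$1$1+Q$2$2+Q$3$3)+1)"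
   "(Q$2$1-Q$1$2)*(Q$2$1-Q$1$2) = (1+Q$1$1+Q$2$2+Q$3$3)*(2*Q$3$3-(Q$1$1+Q$2$2+Q$3$3)+1)"
   "(Q$3$2-Q$2$3)*(Q$1$3-Q$3$1) = (1+Q$1$1+Q$2$2+Q$3$3)*(Q$1$2+Q$2$1)"
   "(Q$3$2-Q$2$3)*(Q$2$1-Q$1$2) = (1+Q$1$1+Q$2$2+Q$3$3)*(Q$1$3+Q$3$1)"
   "(Q$1$3-Q$3$1)*(Q$2$1-Q$1$2) = (1+Q$1$1+Q$2$2+Q$3$3)*(Q$2$3+Q$3$2)"
    using S F(7) by (simp_all add: algebra_simps)
  define A1 where "A1 = Q$3$2-Q$2$3"
  define A2 where "A2 = Q$1$3-Q$3$1"
  define A3 where "A3 = Q$2$1-Q$1$2"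
  define tt where "tt = 1+Q$1$1+Q$2$2+Q$3$3"
  have e: "A1*A1 = tt*(2*Q$1$1-(Q$1$1+Q$2$2+Q$3$3)+1)" "A2*A2 = tt*(2*Q$2$2-(Q$1$1+Q$2$2+Q$3$3)+1)"
    "A3*A3 = tt*(2*Q$3$3-(Q$1$1+Q$2$2+Q$3$3)+1)" "A1*A2 = tt*(Q$1$2+Q$2$1)"
    "A1*A3 = tt*(Q$1$3+Q$3$1)" "A2*A3 = tt*(Q$2$3+Q$3$2)"
    using S' unfolding A1_def A2_def A3_def tt_def by simp_all
  have AQ: "AA Q = vector [A1, A2, A3]" unfolding AA_def A1_def A2_def A3_def
    by (simp add: cs)
  have g1: "(A1 * x$1 + A2*x$2 + A3*x$3) * A1 = tt*((2*Q$1$1-(Q$1$1+Q$2$2+Q$3$3)+1)*x$1 + (Q$1$2+Q$2$1)*x$2 + (Q$1$3+Q$3$1)*x$3)"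
  proof -
    have "(A1 * x$1 + A2*x$2 + A3*x$3) * A1 = x$1*(A1*A1) + x$2*(A1*A2) + x$3*(A1*A3)" by (simp add: algebra_simps)
    then show ?thesis using e by (simp add: algebra_simps)
  qed
  have g2: "(A1 * x$1 + A2*x$2 + A3*x$3) * A2 = tt*((Q$1$2+Q$2$1)*x$1 + (2*Q$2$2-(Q$1$1+Q$2$2+Q$3$3)+1)*x$2 + (Q$2$3+Q$3$2)*x$3)"
  proof -
    have "(A1 * x$1 + A2*x$2 + A3*x$3) * A2 = x$1*(A1*A2) + x$2*(A2*A2) + x$3*(A2*A3)" by (simp add: algebra_simps)
    then show ?thesis using e by (simp add: algebra_simps)
  qed
  have g3: "(A1 * x$1 + A2*x$2 + A3*x$3) * A3 = tt*((Q$1$3+Q$3$1)*x$1 + (Q$2$3+Q$3$2)*x$2 + (2*Q$3$3-(Q$1$1+Q$2$2+Q$3$3)+1)*x$3)"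
  proof -
    have "(A1 * x$1 + A2*x$2 + A3*x$3) * A3 = x$1*(A1*A3) + x$2*(A2*A3) + x$3*(A3*A3)" by (simp add: algebra_simps)
    then show ?thesis using e by (simp add: algebra_simps)
  qed
  have tr: "trace Q = tt - 1" unfolding tt_def by (simp add: trace_def sum_3)
  show ?thesis unfolding AQ tr
    apply (simp add: cs)
    apply (intro conjI)
      apply (subst g1, simp add: tt_def algebra_simps)
     apply (subst g2, simp add: tt_def algebra_simps)
    apply (subst g3, simp add: tt_def algebra_simps)
    done
qed

lemma sym_inner:
  fixes J :: "real^3^3"
  assumes "transpose J = J"
  shows "x \<bullet> (J *v y) = (J *v x) \<bullet> y"
proof -
  have "x \<bullet> (J *v y) = (x v* J) \<bullet> y" by (simp add: dot_lmul_matrix)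
  also have "x v* J = transpose J *v x" by simp
  finally show ?thesis using assms by simp
qed

lemma psd_zero:
  fixes M :: "real^3^3"
  assumes sym: "transpose M = M" and psd: "\<And>x. x \<bullet> (M *v x) \<ge> 0" and u: "u \<bullet> (M *v u) = 0"
  shows "M *v u = 0"
proof -
  let ?y = "M *v u"
  have "\<forall>t::real. 0 \<le> 2*t*(?y \<bullet> ?y) + t^2 * (?y \<bullet> (M *v ?y))"
  proof
    fix t :: real
    have "0 \<le> (u + t *\<^sub>R ?y) \<bullet> (M *v (u + t *\<^sub>R ?y))" by (rule psd)
    also have "\<dots> = u \<bullet> (M *v u) + t * (u \<bullet> (M *v ?y)) + t * (?y \<bullet> (M *v u)) + t^2 * (?y \<bullet> (M *v ?y))"
      by (simp add: matrix_vector_right_distrib matrix_vector_mult_scaleR inner_add_left inner_add_right power2_eq_square algebra_simps)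
    also have "u \<bullet> (M *v ?y) = ?y \<bullet> ?y" using sym_inner[OF sym, of u ?y] by simp
    finally show "0 \<le> 2*t*(?y \<bullet> ?y) + t^2 * (?y \<bullet> (M *v ?y))" using u by simp
  qed
  moreover have "?y \<bullet> ?y = 0"
  proof (rule ccontr)
    assume ne: "?y \<bullet> ?y \<noteq> 0"
    then have pos: "?y \<bullet> ?y > 0" by (simp add: order_le_neq_trans)
    define B where "B = ?y \<bullet> (M *v ?y)"
    have B0: "B \<ge> 0" unfolding B_def by (rule psd)
    define t where "t = - (?y \<bullet> ?y) / (B + 1)"
    have tn: "t < 0" unfolding t_def using pos B0 by (simp add: divide_neg_pos)
    have "0 \<le> 2*t*(?y \<bullet> ?y) + t^2 * B" using calculation unfolding B_def by blast
    moreover have "t^2 * B \<le> t^2 * (B+1)" by (simp add: mult_left_mono)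
    moreover have "t * (B+1) = - (?y \<bullet> ?y)" unfolding t_def using B0 by simp
    moreover have "t^2 * (B+1) = t * (t * (B+1))" by (simp add: power2_eq_square)
    ultimately have "0 \<le> 2*t*(?y \<bullet> ?y) - t * (?y \<bullet> ?y)" by simp
    then have "0 \<le> t * (?y \<bullet> ?y)" by simp
    with mult_neg_pos[OF tn pos] show False by linarith
  qed
  ultimately show ?thesis by simp
qed

lemma lambda_max_props:
  fixes J :: "real^3^3"
  assumes J: "sym_posdef J"
  shows "lambda_max J > 0" "\<And>x. x \<bullet> (J *v x) \<le> lambda_max J * (norm x)^2"
proof -
  have sym: "transpose J = J" and pd: "\<And>x. x \<noteq> 0 \<Longrightarrow> x \<bullet> (J *v x) > 0" using J by (auto simp: sym_posdef_def)
  define S where "S = {l. \<exists>v. v \<noteq> 0 \<and> J *v v = l *\<^sub>R v}"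
  define ev where "ev l = (SOME v. v \<noteq> 0 \<and> J *v v = l *\<^sub>R v)" for l
  have ev: "ev l \<noteq> 0 \<and> J *v ev l = l *\<^sub>R ev l" if "l \<in> S" for l
    using that unfolding S_def ev_def by (metis (mono_tags, lifting) mem_Collect_eq someI_ex)
  have orth: "ev l \<bullet> ev m = 0" if "l \<in> S" "m \<in> S" "l \<noteq> m" for l m
  proof -
    have "l * (ev l \<bullet> ev m) = (J *v ev l) \<bullet> ev m" using ev[OF that(1)] by simp
    also have "\<dots> = ev l \<bullet> (J *v ev m)" using sym_inner[OF sym] by simp
    also have "\<dots> = m * (ev l \<bullet> ev m)" using ev[OF that(2)] by simp
    finally show ?thesis using that(3) by simp
  qed
  have inj: "inj_on ev S"
  proof (rule inj_onI)
    fix l m assume "l \<in> S" "m \<in> S" "ev l = ev m"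
    then show "l = m" using orth[of l m] ev[of l] by (metis inner_eq_zero_iff)
  qed
  have "pairwise orthogonal (ev ` S)"
    unfolding pairwise_def orthogonal_def using orth by (metis imageE)
  moreover have "0 \<notin> ev ` S" using ev by auto
  ultimately have "independent (ev ` S)" by (rule pairwise_orthogonal_independent)
  then have "finite (ev ` S)" using independent_bound by blast
  then have finS: "finite S" using inj finite_imageD by blast
  have "\<exists>u\<in>sphere (0::real^3) 1. \<forall>y\<in>sphere 0 1. y \<bullet> (J *v y) \<le> u \<bullet> (J *v u)"
    by (rule continuous_attains_sup) (auto intro!: continuous_intros)
  then obtain u where u1: "norm u = 1" and umax: "\<And>y. norm y = 1 \<Longrightarrow> y \<bullet> (J *v y) \<le> u \<bullet> (J *v u)"
    by auto
  define mu where "mu = u \<bullet> (J *v u)"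
  have ray: "x \<bullet> (J *v x) \<le> mu * (norm x)^2" for x
  proof (cases "x = 0")
    case True then show ?thesis by simp
  next
    case False
    then have n: "norm x > 0" by simp
    have "(x /\<^sub>R norm x) \<bullet> (J *v (x /\<^sub>R norm x)) \<le> mu" unfolding mu_def
      using umax[of "x /\<^sub>R norm x"] n by simp
    then have "(x \<bullet> (J *v x)) / (norm x)^2 \<le> mu"
      by (simp add: matrix_vector_mult_scaleR power2_eq_square divide_inverse ac_simps)
    then show ?thesis using n by (simp add: divide_le_eq mult.commute)
  qed
  define M where "M = mu *\<^sub>R mat 1 - J"
  have Mx: "M *v x = mu *\<^sub>R x - J *v x" for x
    unfolding M_def by (simp add: vec_eq_iff matrix_vector_mult_def mat_def sum_3 algebra_simps forall_3)
  have "M *v u = 0"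
  proof (rule psd_zero)
    show "transpose M = M"
    proof -
      have Jij: "J$j$i = J$i$j" for i j using arg_cong[OF sym, of "\<lambda>A. A$i$j"] by (simp add: transpose_def)
      show ?thesis unfolding M_def by (simp add: vec_eq_iff transpose_def mat_def Jij)
    qed
    show "0 \<le> x \<bullet> (M *v x)" for x using ray[of x] by (simp add: Mx inner_diff_right power2_norm_eq_inner)
    show "u \<bullet> (M *v u) = 0" using u1 by (simp add: Mx inner_diff_right mu_def power2_norm_eq_inner[symmetric])
  qed
  then have "J *v u = mu *\<^sub>R u" by (simp add: Mx)
  moreover have "u \<noteq> 0" using u1 by auto
  ultimately have muS: "mu \<in> S" unfolding S_def by blast
  then have mule: "mu \<le> lambda_max J" unfolding lambda_max_def S_def[symmetric] using finS by simp
  have mupos: "mu > 0" unfolding mu_def using pd \<open>u \<noteq> 0\<close> by simp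
  show "lambda_max J > 0" using mule mupos by simp
  show "x \<bullet> (J *v x) \<le> lambda_max J * (norm x)^2" for x
    using ray[of x] mule by (meson order_trans mult_right_mono zero_le_power2)
qed

lemma lin_mm1: "linear (\<lambda>B. (A::real^3^3) ** B)"
  by (rule linearI) (simp_all add: cs algebra_simps)
lemma lin_mm2: "linear (\<lambda>A. (A::real^3^3) ** B)"
  by (rule linearI) (simp_all add: cs algebra_simps)
lemma bb_mm: "bounded_bilinear ((**) :: real^3^3 \<Rightarrow> real^3^3 \<Rightarrow> real^3^3)"
  unfolding bilinear_conv_bounded_bilinear[symmetric] bilinear_def using lin_mm1 lin_mm2 by blast
lemma bl_transpose: "bounded_linear (transpose :: real^3^3 \<Rightarrow> real^3^3)"
  unfolding linear_conv_bounded_linear[symmetric] by (rule linearI) (simp_all add: cs)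
lemma bl_trace: "bounded_linear (trace :: real^3^3 \<Rightarrow> real)"
  unfolding linear_conv_bounded_linear[symmetric] by (rule linearI) (simp_all add: cs algebra_simps)
lemma bl_AA: "bounded_linear AA"
  unfolding linear_conv_bounded_linear[symmetric] by (rule linearI) (simp_all add: cs AA_def algebra_simps)
lemma bl_mml: "bounded_linear (\<lambda>B. (A::real^3^3) ** B)"
  using lin_mm1 linear_conv_bounded_linear by blast

lemma hat_transpose: "transpose (hat x) = - hat x"
  by (simp add: cs)

lemma SO3_right: "A \<in> SO3 \<Longrightarrow> A ** transpose A = mat 1"
  unfolding SO3_def using matrix_left_right_inverse by blast

locale traj =
  fixes J Rd :: "real^3^3" and kR kO :: real and R :: "real \<Rightarrow> real^3^3" and Om Om' :: "real \<Rightarrow> real^3"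
  assumes J: "sym_posdef J" and Rd: "Rd \<in> SO3" and kR: "kR > 0" and kO: "kO > 0"
    and R0: "R 0 \<in> SO3"
    and dR: "\<forall>t\<ge>0. (R has_vector_derivative (R t ** hat (Om t))) (at t within {0..})"
    and dO: "\<forall>t\<ge>0. (Om has_vector_derivative Om' t) (at t within {0..})"
    and eq: "\<forall>t\<ge>0. J *v Om' t + cross3 (Om t) (J *v Om t)
               = - kR *\<^sub>R eR (R t) Rd - kO *\<^sub>R eOmega (R t) Rd (Om t) 0"
begin

definition "Q t = transpose Rd ** R t"
definition "tau t = 1 + trace (Q t)"
definition "w t = sqrt (tau t) / 2"
definition "v t = eR (R t) Rd"

lemma dQ: "t \<ge> 0 \<Longrightarrow> (Q has_vector_derivative (Q t ** hat (Om t))) (at t within {0..})"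
  unfolding Q_def[abs_def]
  using bounded_linear.has_vector_derivative[OF bl_mml dR[rule_format]]
  by (simp add: matrix_mul_assoc)

lemma contQ: "continuous_on {0..} Q"
  by (rule continuous_on_vector_derivative) (use dQ in auto)

lemma QQT: assumes "t \<ge> 0" shows "Q t ** transpose (Q t) = mat 1"
proof -
  define P where "P t = Q t ** transpose (Q t)" for t
  have "(P has_vector_derivative 0) (at s within {0..})" if "s \<ge> 0" for s
  proof -
    have d1: "((\<lambda>t. transpose (Q t)) has_vector_derivative transpose (Q s ** hat (Om s))) (at s within {0..})"
      by (rule bounded_linear.has_vector_derivative[OF bl_transpose dQ[OF that]])
    have "(P has_vector_derivative (Q s ** transpose (Q s ** hat (Om s)) + (Q s ** hat (Om s)) ** transpose (Q s))) (at s within {0..})"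
      unfolding P_def[abs_def] by (rule bounded_bilinear.has_vector_derivative[OF bb_mm dQ[OF that] d1])
    moreover have "Q s ** transpose (Q s ** hat (Om s)) + (Q s ** hat (Om s)) ** transpose (Q s) = 0"
      by (simp add: matrix_transpose_mul hat_transpose matrix_mul_assoc cs algebra_simps)
    ultimately show ?thesis by simp
  qed
  then obtain c where c: "\<And>s. s \<in> {0..} \<Longrightarrow> P s = c"
    using has_vector_derivative_zero_constant[of "{0::real..}" P] by auto
  have "P 0 = mat 1"
  proof -
    have "P 0 = transpose Rd ** (R 0 ** transpose (R 0)) ** Rd"
      unfolding P_def Q_def by (simp add: matrix_transpose_mul matrix_mul_assoc)
    also have "\<dots> = mat 1" using SO3_right[OF R0] Rd by (simp add: SO3_def)
    finally show ?thesis .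
  qed
  then show ?thesis using c[of t] c[of 0] assms unfolding P_def by simp
qed

lemma QTQ: "t \<ge> 0 \<Longrightarrow> transpose (Q t) ** Q t = mat 1"
  using QQT matrix_left_right_inverse by blast

lemma contdet: "continuous_on {0..} (\<lambda>t. det (Q t))"
  unfolding det_3 by (intro continuous_intros contQ)

lemma Q_SO3: assumes "t \<ge> 0" shows "Q t \<in> SO3"
proof -
  have sq: "det (Q s) * det (Q s) = 1" if "s \<ge> 0" for s
    using arg_cong[OF QQT[OF that], of det] by (simp add: det_mul)
  have d0: "det (Q 0) = 1" unfolding Q_def using Rd R0 by (simp add: det_mul SO3_def)
  have "det (Q t) = 1"
  proof (rule ccontr)
    assume "det (Q t) \<noteq> 1"
    moreover have "(det (Q t) - 1) * (det (Q t) + 1) = 0"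
      using sq[OF assms] by (simp add: algebra_simps)
    ultimately have m: "det (Q t) = -1" by simp
    have "\<exists>x. 0 \<le> x \<and> x \<le> t \<and> det (Q x) = 0"
      by (rule IVT2') (use m d0 assms in \<open>auto intro: continuous_on_subset[OF contdet]\<close>)
    then obtain x where "0 \<le> x" "det (Q x) = 0" by blast
    then show False using sq[of x] by simp
  qed
  then show ?thesis using QTQ[OF assms] by (simp add: SO3_def)
qed

lemma v_eq: "v t = (1 / (2 * sqrt (tau t))) *\<^sub>R AA (Q t)"
  unfolding v_def eR_def tau_def AA_def Q_def by (simp add: matrix_transpose_mul)

lemma Psi_eq: "Psi (R t) Rd = 2 - 2 * w t"
  unfolding Psi_def w_def tau_def Q_def by simp

lemma eOm: "eOmega (R t) Rd (Om t) 0 = Om t"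
  unfolding eOmega_def by simp

lemma dtau: "t \<ge> 0 \<Longrightarrow> (tau has_real_derivative - (AA (Q t) \<bullet> Om t)) (at t within {0..})"
proof -
  assume t: "t \<ge> 0"
  have "((\<lambda>s. trace (Q s)) has_vector_derivative trace (Q t ** hat (Om t))) (at t within {0..})"
    by (rule bounded_linear.has_vector_derivative[OF bl_trace dQ[OF t]])
  then have "((\<lambda>s. 1 + trace (Q s)) has_vector_derivative trace (Q t ** hat (Om t))) (at t within {0..})"
    by (simp add: has_vector_derivative_add_const add.commute[of 1])
  then show ?thesis unfolding tau_def[abs_def] has_real_derivative_iff_has_vector_derivative L3 .
qed

lemma dAA: "t \<ge> 0 \<Longrightarrow> ((\<lambda>s. AA (Q s)) has_vector_derivative (trace (Q t) *\<^sub>R Om t - transpose (Q t) *v Om t)) (at t within {0..})"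
  using bounded_linear.has_vector_derivative[OF bl_AA dQ] by (simp add: AA_def L4)

lemma tau_le: "t \<ge> 0 \<Longrightarrow> tau t \<le> 4"
  using SO3_L1(2)[OF Q_SO3] by (simp add: tau_def)

lemma normv: assumes "t \<ge> 0" "tau t > 0" shows "(norm (v t))^2 + (w t)^2 = 1"
proof -
  define s where "s = sqrt (tau t)"
  have s0: "s > 0" and ss: "s * s = tau t" using assms(2) by (auto simp: s_def)
  have "norm (v t) = norm (AA (Q t)) / (2 * s)" using s0 by (simp add: v_eq s_def[symmetric])
  then have "(norm (v t))^2 = (norm (AA (Q t)))^2 / (4 * tau t)"
    by (simp add: power_divide power2_eq_square ss[symmetric] algebra_simps)
  also have "\<dots> = tau t * (4 - tau t) / (4 * tau t)"
    using SO3_L1(1)[OF Q_SO3[OF assms(1)]] by (simp add: tau_def algebra_simps)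
  also have "\<dots> = (4 - tau t) / 4" using assms by simp
  finally have "(norm (v t))^2 = (4 - tau t) / 4" .
  moreover have "(w t)^2 = tau t / 4" unfolding w_def s_def[symmetric] using ss
    by (simp add: power_divide power2_eq_square)
  ultimately show ?thesis by simp
qed

end

lemma (in -) alg_v:
  fixes x Mx MTx a :: "real^3" and s tr :: real
  assumes s: "s > 0" "s * s = 1 + tr"
    and L2: "(a \<bullet> x) *\<^sub>R a = (s * s) *\<^sub>R ((Mx + MTx) - (tr - 1) *\<^sub>R x)"
    and L5: "cross3 a x = Mx - MTx"
  shows "(1 / (2 * s)) *\<^sub>R (tr *\<^sub>R x - MTx) + ((a \<bullet> x) / (4 * (s * s) * s)) *\<^sub>R a
       = (1/2) *\<^sub>R ((s/2) *\<^sub>R x + cross3 ((1 / (2 * s)) *\<^sub>R a) x)"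
proof -
  have "((a \<bullet> x) / (4 * (s * s) * s)) *\<^sub>R a = (1 / (4 * (s * s) * s)) *\<^sub>R ((a \<bullet> x) *\<^sub>R a)"
    by simp
  also have "\<dots> = (1 / (4 * s)) *\<^sub>R ((Mx + MTx) - (tr - 1) *\<^sub>R x)"
    unfolding L2 scaleR_scaleR using s(1) by (simp add: field_simps)
  finally have e1: "((a \<bullet> x) / (4 * (s * s) * s)) *\<^sub>R a = (1 / (4 * s)) *\<^sub>R ((Mx + MTx) - (tr - 1) *\<^sub>R x)" .
  have e2: "cross3 ((1 / (2 * s)) *\<^sub>R a) x = (1 / (2 * s)) *\<^sub>R (Mx - MTx)"
    by (simp add: cross_mult_left L5)
  have tr: "tr = s * s - 1" using s by simp
  show ?thesis unfolding e1 e2 tr using s(1)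
    by (simp add: vec_eq_iff field_simps)
qed

context traj begin

lemma dw: assumes "t \<ge> 0" "tau t > 0"
  shows "(w has_real_derivative - (v t \<bullet> Om t) / 2) (at t within {0..})"
proof -
  have d1: "((\<lambda>s. sqrt (tau s)) has_real_derivative (inverse (sqrt (tau t)) / 2 * (- (AA (Q t) \<bullet> Om t)))) (at t within {0..})"
    by (rule DERIV_chain2[OF DERIV_real_sqrt[OF assms(2)] dtau[OF assms(1)]])
  have D: "(w has_real_derivative (inverse (sqrt (tau t)) / 2 * (- (AA (Q t) \<bullet> Om t))) / 2) (at t within {0..})"
    unfolding w_def[abs_def] by (rule DERIV_cdivide[OF d1])
  have vv: "v t \<bullet> Om t = (1 / (2 * sqrt (tau t))) * (AA (Q t) \<bullet> Om t)" unfolding v_eq by (rule inner_scaleR_left)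
  have E: "(inverse (sqrt (tau t)) / 2 * (- (AA (Q t) \<bullet> Om t))) / 2 = - (v t \<bullet> Om t) / 2"
    unfolding vv by (simp add: inverse_eq_divide)
  show ?thesis using D unfolding E .
qed

lemma dv: assumes "t \<ge> 0" "tau t > 0"
  shows "(v has_vector_derivative (1/2) *\<^sub>R (w t *\<^sub>R Om t + cross3 (v t) (Om t))) (at t within {0..})"
proof -
  define s where "s = sqrt (tau t)"
  have s0: "s > 0" and ss: "s * s = tau t" using assms(2) by (auto simp: s_def)
  have d1: "((\<lambda>s. sqrt (tau s)) has_real_derivative (inverse s / 2 * (- (AA (Q t) \<bullet> Om t)))) (at t within {0..})"
    unfolding s_def by (rule DERIV_chain2[OF DERIV_real_sqrt[OF assms(2)] dtau[OF assms(1)]])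
  have d2: "((\<lambda>r. 2 * sqrt (tau r)) has_real_derivative 2 * (inverse s / 2 * (- (AA (Q t) \<bullet> Om t)))) (at t within {0..})"
    by (rule DERIV_cmult[OF d1])
  have d3: "((\<lambda>r. inverse (2 * sqrt (tau r))) has_real_derivative
      - (2 * (inverse s / 2 * (- (AA (Q t) \<bullet> Om t))) * inverse ((2 * sqrt (tau t)) ^ Suc (Suc 0)))) (at t within {0..})"
    by (rule DERIV_inverse_fun[OF d2]) (use s0 s_def in simp)
  have f': "- (2 * (inverse s / 2 * (- (AA (Q t) \<bullet> Om t))) * inverse ((2 * sqrt (tau t)) ^ Suc (Suc 0)))
      = (AA (Q t) \<bullet> Om t) / (4 * (s * s) * s)"
    unfolding s_def[symmetric] using s0 by (simp add: field_simps)
  have d4: "(v has_vector_derivative (inverse (2 * sqrt (tau t)) *\<^sub>R (trace (Q t) *\<^sub>R Om t - transpose (Q t) *v Om t)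
      + ((AA (Q t) \<bullet> Om t) / (4 * (s * s) * s)) *\<^sub>R AA (Q t))) (at t within {0..})"
  proof -
    have vf: "v = (\<lambda>r. inverse (2 * sqrt (tau r)) *\<^sub>R AA (Q r))" by (rule ext) (simp only: v_eq inverse_eq_divide)
    show ?thesis unfolding vf by (rule has_vector_derivative_scaleR[OF d3 dAA[OF assms(1)], unfolded f'])
  qed
  have EQ: "inverse (2 * sqrt (tau t)) *\<^sub>R (trace (Q t) *\<^sub>R Om t - transpose (Q t) *v Om t)
      + ((AA (Q t) \<bullet> Om t) / (4 * (s * s) * s)) *\<^sub>R AA (Q t)
      = (1/2) *\<^sub>R ((s/2) *\<^sub>R Om t + cross3 ((1 / (2 * s)) *\<^sub>R AA (Q t)) (Om t))"
    unfolding s_def[symmetric] inverse_eq_divide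
  proof (rule alg_v[OF s0])
    show "s * s = 1 + trace (Q t)" using ss by (simp add: tau_def)
    show "(AA (Q t) \<bullet> Om t) *\<^sub>R AA (Q t) = (s * s) *\<^sub>R ((Q t *v Om t + transpose (Q t) *v Om t) - (trace (Q t) - 1) *\<^sub>R Om t)"
      using SO3_L2[OF Q_SO3[OF assms(1)], of "Om t"] ss by (simp add: tau_def matrix_vector_mult_add_rdistrib)
    show "cross3 (AA (Q t)) (Om t) = Q t *v Om t - transpose (Q t) *v Om t"
      using L5[of "Q t" "Om t"] by (simp add: matrix_vector_mult_diff_rdistrib)
  qed
  have ws: "w t = s / 2" by (simp add: w_def s_def)
  have vs: "v t = (1 / (2 * s)) *\<^sub>R AA (Q t)" by (simp add: s_def v_eq)
  show ?thesis unfolding ws vs using d4 unfolding EQ .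
qed

end

lemma norm_cross_le: "norm (cross3 x y) \<le> norm x * norm y"
proof -
  have "(norm (cross3 x y))^2 \<le> (norm x * norm y)^2"
    using norm_cross_dot[of x y] zero_le_power2[of "x \<bullet> y"] by linarith
  then show ?thesis by (rule power2_le_imp_le) simp
qed

lemma ml0: fixes c x :: real shows "c \<ge> 0 \<Longrightarrow> c * \<bar>x\<bar> = \<bar>c * x\<bar>"
  by (simp add: abs_mult)
lemma ml1: fixes c x :: real shows "c \<ge> 0 \<Longrightarrow> - (c * \<bar>x\<bar>) \<le> c * x"
  using ml0[of c x] abs_ge_minus_self[of "c * x"] by linarith
lemma ml2: fixes c x :: real shows "c \<ge> 0 \<Longrightarrow> c * x \<le> c * \<bar>x\<bar>"
  using ml0[of c x] abs_ge_self[of "c * x"] by linarith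

lemma pointwise:
  fixes v Om JOm :: "real^3" and w K lm c kR kO :: real
  assumes w0: "w > 0" and vw: "(norm v)^2 + w^2 = 1"
    and K: "K > 0" and JK: "norm JOm \<le> K * norm Om"
    and lm: "lm > 0" and Jl: "Om \<bullet> JOm \<ge> lm * (norm Om)^2"
    and kR: "kR > 0" and kO: "kO > 0" and c0: "c > 0"
    and c1: "c * (2*K + kO^2/(2*kR)) \<le> kO/2" and c2: "c \<le> lm/(2*K)" and c3: "c \<le> kR/K"
  defines "W \<equiv> Om \<bullet> JOm / 2 + 2*kR*(1 - w) + c * (v \<bullet> JOm)"
    and "Wd \<equiv> - kO * (norm Om)^2 + c * (((1/2) *\<^sub>R (w *\<^sub>R Om + cross3 v Om)) \<bullet> JOm
                 + v \<bullet> (- cross3 Om JOm - kR *\<^sub>R v - kO *\<^sub>R Om))"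
    and "n \<equiv> (norm v)^2 + (norm Om)^2"
  shows "min (lm/4) (kR/2) * n \<le> W" "W \<le> (K + 2*kR + c*K) * n" "Wd \<le> - min (kO/2) (c*kR/2) * n"
proof -
  define p where "p = norm v"
  define q where "q = norm Om"
  have p0: "p \<ge> 0" and q0: "q \<ge> 0" by (simp_all add: p_def q_def)
  have pw: "p^2 = 1 - w^2" using vw by (simp add: p_def)
  have w1: "w \<le> 1"
  proof -
    have "w^2 \<le> 1" using vw by (metis le_add_same_cancel2 zero_le_power2)
    then show ?thesis using power2_le_imp_le[of w 1] by simp
  qed
  have p1: "p \<le> 1"
  proof -
    have "p^2 \<le> 1" using pw by simp
    then show ?thesis using power2_le_imp_le[of p 1] by simp
  qed
  have lo1: "1 - w \<le> p^2"
  proof -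
    have "p^2 = (1 - w) * (1 + w)" using pw by (simp add: algebra_simps power2_eq_square)
    moreover have "(1 - w) * 1 \<le> (1 - w) * (1 + w)" using w0 w1 by (intro mult_left_mono) auto
    ultimately show ?thesis by simp
  qed
  have up1: "p^2 \<le> 2 * (1 - w)"
  proof -
    have "p^2 = (1 - w) * (1 + w)" using pw by (simp add: algebra_simps power2_eq_square)
    moreover have "(1 - w) * (1 + w) \<le> (1 - w) * 2" using w0 w1 by (intro mult_left_mono) auto
    ultimately show ?thesis by simp
  qed
  have JOq: "norm JOm \<le> K * q" using JK by (simp add: q_def)
  have vJ: "\<bar>v \<bullet> JOm\<bar> \<le> p * (K * q)"
  proof -
    have "\<bar>v \<bullet> JOm\<bar> \<le> p * norm JOm" using Cauchy_Schwarz_ineq2[of v JOm] unfolding p_def .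
    also have "\<dots> \<le> p * (K * q)" using JOq p0 by (rule mult_left_mono)
    finally show ?thesis .
  qed
  have OJup: "Om \<bullet> JOm \<le> K * q^2"
  proof -
    have "Om \<bullet> JOm \<le> q * norm JOm"
      using Cauchy_Schwarz_ineq2[of Om JOm] unfolding q_def by linarith
    also have "\<dots> \<le> q * (K * q)" using JOq q0 by (rule mult_left_mono)
    finally have "Om \<bullet> JOm \<le> q * (K * q)" .
    then show ?thesis by (simp add: power2_eq_square algebra_simps)
  qed
  have OJlo: "Om \<bullet> JOm \<ge> lm * q^2" using Jl by (simp add: q_def)
  have am: "2 * p * q \<le> p^2 + q^2"
    using sum_squares_bound[of p q] by (simp add: power2_eq_square)
  have cK1: "c * K \<le> lm / 2"
  proof -
    have "c * K \<le> lm/(2*K) * K" using mult_right_mono[OF c2, of K] K by simp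
    also have "\<dots> = lm / 2" using K by simp
    finally show ?thesis .
  qed
  have cK2: "c * K \<le> kR"
  proof -
    have "c * K \<le> kR/K * K" using mult_right_mono[OF c3, of K] K by simp
    also have "\<dots> = kR" using K by simp
    finally show ?thesis .
  qed
  have cross: "c * \<bar>v \<bullet> JOm\<bar> \<le> (c * K / 2) * (p^2 + q^2)"
  proof -
    have "c * \<bar>v \<bullet> JOm\<bar> \<le> c * (p * (K * q))" using vJ c0 by (simp add: mult_left_mono)
    also have "\<dots> = (c * K / 2) * (2 * p * q)" by (simp add: algebra_simps)
    also have "\<dots> \<le> (c * K / 2) * (p^2 + q^2)" using am c0 K by (intro mult_left_mono) auto
    finally show ?thesis .
  qed
  have nn: "n = p^2 + q^2" by (simp add: n_def p_def q_def)
  show "min (lm/4) (kR/2) * n \<le> W"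
  proof -
    have "W \<ge> lm * q^2 / 2 + kR * p^2 - (c * K / 2) * (p^2 + q^2)"
    proof -
      have "c * (v \<bullet> JOm) \<ge> - (c * \<bar>v \<bullet> JOm\<bar>)" using c0 by (intro ml1) simp
      moreover have "2*kR*(1 - w) \<ge> kR * p^2" using up1 kR by simp
      ultimately show ?thesis unfolding W_def using OJlo cross by linarith
    qed
    moreover have "lm * q^2 / 2 + kR * p^2 - (c * K / 2) * (p^2 + q^2) \<ge> (lm/4) * q^2 + (kR/2) * p^2"
    proof -
      have h1: "c * K / 2 \<le> lm/4" using cK1 by linarith
      have h2: "c * K / 2 \<le> kR/2" using cK2 by linarith
      have "(c * K / 2) * q^2 \<le> (lm/4) * q^2" by (rule mult_right_mono[OF h1]) simp
      moreover have "(c * K / 2) * p^2 \<le> (kR/2) * p^2" by (rule mult_right_mono[OF h2]) simp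
      ultimately show ?thesis by (simp add: algebra_simps)
    qed
    moreover have "(lm/4) * q^2 + (kR/2) * p^2 \<ge> min (lm/4) (kR/2) * (p^2 + q^2)"
    proof -
      have "min (lm/4) (kR/2) * q^2 \<le> (lm/4) * q^2" by (intro mult_right_mono) auto
      moreover have "min (lm/4) (kR/2) * p^2 \<le> (kR/2) * p^2" by (intro mult_right_mono) auto
      ultimately show ?thesis by (simp add: algebra_simps)
    qed
    ultimately show ?thesis unfolding nn by linarith
  qed
  show "W \<le> (K + 2*kR + c*K) * n"
  proof -
    have "c * (v \<bullet> JOm) \<le> c * \<bar>v \<bullet> JOm\<bar>" using c0 by (intro ml2) simp
    moreover have "2*kR*(1 - w) \<le> 2*kR * p^2" using lo1 kR by simp
    ultimately have "W \<le> K * q^2 / 2 + 2*kR * p^2 + (c * K / 2) * (p^2 + q^2)"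
      unfolding W_def using OJup cross by linarith
    moreover have "K * q^2 / 2 \<le> K * q^2" using K by simp
    moreover have "2*kR*p^2 \<le> 2*kR*p^2 + K*p^2" using K by simp
    moreover have "(c * K / 2) * (p^2 + q^2) \<le> c * K * (p^2 + q^2)" using c0 K by (simp add: field_simps)
    ultimately have "W \<le> K * q^2 + (2*kR*p^2 + K*p^2) + c*K*(p^2+q^2)" by linarith
    moreover have "(K + 2*kR + c*K) * (p^2 + q^2) = K * q^2 + (2*kR*p^2 + K*p^2) + c*K*(p^2+q^2) + 2*kR*q^2"
      by (simp add: algebra_simps)
    moreover have "0 \<le> 2*kR*q^2" using kR by simp
    ultimately show ?thesis unfolding nn by linarith
  qed
  show "Wd \<le> - min (kO/2) (c*kR/2) * n"
  proof -
    define vd where "vd = (1/2) *\<^sub>R (w *\<^sub>R Om + cross3 v Om)"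
    have nvd: "norm vd \<le> q"
    proof -
      have "norm vd = (1/2) * norm (w *\<^sub>R Om + cross3 v Om)" by (simp add: vd_def)
      also have "\<dots> \<le> (1/2) * (norm (w *\<^sub>R Om) + norm (cross3 v Om))"
        by (intro mult_left_mono norm_triangle_ineq) simp
      also have "norm (w *\<^sub>R Om) \<le> q" using w0 w1 by (simp add: q_def mult_left_le_one_le)
      also have "norm (cross3 v Om) \<le> q"
      proof -
        have "norm (cross3 v Om) \<le> p * q" using norm_cross_le[of v Om] by (simp add: p_def q_def)
        also have "\<dots> \<le> 1 * q" using p1 q0 by (rule mult_right_mono)
        finally show ?thesis by simp
      qed
      finally show ?thesis by simp
    qed
    have t1: "\<bar>vd \<bullet> JOm\<bar> \<le> K * q^2"
    proof -
      have "\<bar>vd \<bullet> JOm\<bar> \<le> norm vd * norm JOm" by (rule Cauchy_Schwarz_ineq2)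
      also have "\<dots> \<le> q * (K * q)" using nvd JOq q0 by (intro mult_mono) auto
      finally show ?thesis by (simp add: power2_eq_square algebra_simps)
    qed
    have t2: "\<bar>v \<bullet> cross3 Om JOm\<bar> \<le> K * q^2"
    proof -
      have "\<bar>v \<bullet> cross3 Om JOm\<bar> \<le> p * norm (cross3 Om JOm)" using Cauchy_Schwarz_ineq2 by (simp add: p_def)
      also have "\<dots> \<le> 1 * (q * (K * q))"
      proof (rule mult_mono[OF p1])
        have "norm (cross3 Om JOm) \<le> q * norm JOm" using norm_cross_le[of Om JOm] by (simp add: q_def)
        also have "\<dots> \<le> q * (K * q)" using JOq q0 by (rule mult_left_mono)
        finally show "norm (cross3 Om JOm) \<le> q * (K * q)" .
      qed (use q0 K in auto)
      finally show ?thesis by (simp add: power2_eq_square algebra_simps)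
    qed
    have t3: "kO * \<bar>v \<bullet> Om\<bar> \<le> kR * p^2 / 2 + kO^2 * q^2 / (2*kR)"
    proof -
      have A: "kO * \<bar>v \<bullet> Om\<bar> \<le> kO * (p * q)" using Cauchy_Schwarz_ineq2[of v Om] kO by (simp add: p_def q_def)
      have "0 \<le> (kR * p - kO * q)^2" by simp
      then have "2 * kR * (kO * (p*q)) \<le> kR^2 * p^2 + kO^2 * q^2" by (simp add: power2_eq_square algebra_simps)
      then have "kO * (p*q) \<le> (kR^2 * p^2 + kO^2 * q^2) / (2 * kR)" using kR by (simp add: field_simps)
      also have "\<dots> = kR * p^2 / 2 + kO^2 * q^2 / (2*kR)" using kR by (simp add: field_simps power2_eq_square)
      finally show ?thesis using A by linarith
    qed
    have vv: "v \<bullet> (- cross3 Om JOm - kR *\<^sub>R v - kO *\<^sub>R Om) = - (v \<bullet> cross3 Om JOm) - kR * p^2 - kO * (v \<bullet> Om)"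
      by (simp add: inner_diff_right p_def power2_norm_eq_inner)
    have inner_bd: "vd \<bullet> JOm + v \<bullet> (- cross3 Om JOm - kR *\<^sub>R v - kO *\<^sub>R Om)
        \<le> (2*K + kO^2/(2*kR)) * q^2 - kR * p^2 / 2"
    proof -
      have "kO * (v \<bullet> Om) \<ge> - (kO * \<bar>v \<bullet> Om\<bar>)" using kO by (intro ml1) simp
      moreover have "vd \<bullet> JOm \<le> K * q^2" using t1 by linarith
      moreover have "- (v \<bullet> cross3 Om JOm) \<le> K * q^2" using t2 by linarith
      ultimately have "vd \<bullet> JOm + v \<bullet> (- cross3 Om JOm - kR *\<^sub>R v - kO *\<^sub>R Om)
        \<le> K * q^2 + K * q^2 - kR * p^2 + (kR * p^2 / 2 + kO^2 * q^2 / (2*kR))"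
        unfolding vv using t3 by linarith
      also have "\<dots> = (2*K + kO^2/(2*kR)) * q^2 - kR * p^2 / 2" by (simp add: algebra_simps)
      finally show ?thesis .
    qed
    have "Wd \<le> - kO * q^2 + c * ((2*K + kO^2/(2*kR)) * q^2 - kR * p^2 / 2)"
      unfolding Wd_def vd_def[symmetric] using inner_bd c0 by (simp add: q_def mult_left_mono)
    also have "\<dots> = - kO * q^2 + (c * (2*K + kO^2/(2*kR))) * q^2 - (c * kR / 2) * p^2" by (simp add: algebra_simps)
    also have "\<dots> \<le> - kO * q^2 + (kO/2) * q^2 - (c * kR / 2) * p^2"
      using mult_right_mono[OF c1, of "q^2"] by simp
    also have "\<dots> = - ((kO/2) * q^2 + (c * kR / 2) * p^2)" by simp
    also have "\<dots> \<le> - (min (kO/2) (c*kR/2) * (p^2 + q^2))"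
    proof -
      have "min (kO/2) (c*kR/2) * q^2 \<le> (kO/2) * q^2" by (intro mult_right_mono) auto
      moreover have "min (kO/2) (c*kR/2) * p^2 \<le> (c*kR/2) * p^2" by (intro mult_right_mono) auto
      ultimately show ?thesis by (simp add: algebra_simps)
    qed
    finally show ?thesis unfolding nn by simp
  qed
qed

context traj begin

lemma contOm: "continuous_on {0..} Om"
  by (rule continuous_on_vector_derivative) (use dO in auto)

lemma conttau: "continuous_on {0..} tau"
  unfolding tau_def[abs_def] trace_def sum_3 by (intro continuous_intros contQ)

lemma contw: "continuous_on {0..} w"
  unfolding w_def[abs_def] by (intro continuous_intros conttau) auto

lemma JOm': "t \<ge> 0 \<Longrightarrow> J *v Om' t = - cross3 (Om t) (J *v Om t) - kR *\<^sub>R v t - kO *\<^sub>R Om t"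
proof -
  assume t: "t \<ge> 0"
  have e: "J *v Om' t + cross3 (Om t) (J *v Om t) = - kR *\<^sub>R v t - kO *\<^sub>R Om t"
    using eq[rule_format, OF t] unfolding eOm v_def[symmetric] .
  have "J *v Om' t = (J *v Om' t + cross3 (Om t) (J *v Om t)) - cross3 (Om t) (J *v Om t)" by simp
  also have "\<dots> = - kR *\<^sub>R v t - kO *\<^sub>R Om t - cross3 (Om t) (J *v Om t)" unfolding e ..
  also have "\<dots> = - cross3 (Om t) (J *v Om t) - kR *\<^sub>R v t - kO *\<^sub>R Om t" by (simp add: algebra_simps)
  finally show ?thesis .
qed

lemma symJ: "transpose J = J" using J by (simp add: sym_posdef_def)

definition "phi t = Om t \<bullet> (J *v Om t)"

lemma dphi: assumes "t \<ge> 0"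
  shows "(phi has_real_derivative 2 * (Om t \<bullet> (J *v Om' t))) (at t within {0..})"
proof -
  have d1: "((\<lambda>s. J *v Om s) has_vector_derivative J *v Om' t) (at t within {0..})"
    by (rule bounded_linear.has_vector_derivative[OF matrix_vector_mul_bounded_linear dO[rule_format, OF assms]])
  have "(phi has_vector_derivative (Om t \<bullet> (J *v Om' t) + Om' t \<bullet> (J *v Om t))) (at t within {0..})"
    unfolding phi_def[abs_def]
    by (rule bounded_bilinear.has_vector_derivative[OF bounded_bilinear_inner dO[rule_format, OF assms] d1])
  moreover have "Om' t \<bullet> (J *v Om t) = Om t \<bullet> (J *v Om' t)"
    using sym_inner[OF symJ, of "Om' t" "Om t"] by (simp add: inner_commute)
  ultimately show ?thesis by (simp add: has_real_derivative_iff_has_vector_derivative)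
qed

definition "Vf t = phi t / 2 + 2 * kR * (1 - w t)"

lemma dV: assumes "t \<ge> 0" "tau t > 0"
  shows "(Vf has_real_derivative - kO * (norm (Om t))^2) (at t within {0..})"
proof -
  have "(Vf has_real_derivative (2 * (Om t \<bullet> (J *v Om' t))) / 2 + 2 * kR * (0 - (- (v t \<bullet> Om t) / 2))) (at t within {0..})"
    unfolding Vf_def[abs_def]
    by (intro DERIV_add DERIV_cdivide DERIV_cmult DERIV_diff DERIV_const dphi dw assms)
  moreover have "(2 * (Om t \<bullet> (J *v Om' t))) / 2 + 2 * kR * (0 - (- (v t \<bullet> Om t) / 2)) = - kO * (norm (Om t))^2"
    unfolding JOm'[OF assms(1)]
    by (simp add: inner_diff_right dot_cross_self power2_norm_eq_inner inner_commute[of "Om t" "v t"] inner_add_right field_simps)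
  ultimately show ?thesis by simp
qed

lemma contphi: "continuous_on {0..} phi"
proof -
  have "continuous_on {0..} (\<lambda>t. J *v Om t)"
    by (rule linear_continuous_on_compose[OF contOm]) simp
  then show ?thesis unfolding phi_def[abs_def] by (intro continuous_intros contOm)
qed

lemma contV: "continuous_on {0..} Vf"
  unfolding Vf_def[abs_def] by (intro continuous_intros contphi contw) auto

lemma phi_nonneg: "phi t \<ge> 0"
proof (cases "Om t = 0")
  case True then show ?thesis by (simp add: phi_def)
next
  case False then show ?thesis using J by (auto simp: phi_def sym_posdef_def intro: less_imp_le)
qed

lemma tau_pos: "w t > 0 \<Longrightarrow> tau t > 0"
  unfolding w_def by simp

lemma at_int: "x > 0 \<Longrightarrow> at x within {0..} = at (x::real)"
  by (rule at_within_interior) simp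

lemma V_decr:
  assumes T: "T \<ge> 0" and pos: "\<And>u. 0 \<le> u \<Longrightarrow> u \<le> T \<Longrightarrow> w u > 0"
  shows "Vf T \<le> Vf 0"
proof (rule DERIV_nonpos_imp_decreasing_open[OF T])
  fix x assume x: "0 < x" "x < T"
  have "(Vf has_real_derivative - kO * (norm (Om x))^2) (at x)"
    using dV[of x] x pos[of x] tau_pos at_int[OF x(1)] by simp
  then show "\<exists>y. (Vf has_real_derivative y) (at x) \<and> y \<le> 0" using kO by auto
next
  show "continuous_on {0..T} Vf" by (rule continuous_on_subset[OF contV]) auto
qed

lemma phase1:
  assumes P0: "Psi (R 0) Rd < 2"
    and O0: "(norm (Om 0))^2 < 2 * kR / lambda_max J * (2 - Psi (R 0) Rd)"
  shows "Vf 0 < 2 * kR" "\<And>t. t \<ge> 0 \<Longrightarrow> w t > 0"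
proof -
  have w0: "w 0 > 0" using P0 by (simp add: Psi_eq)
  have lp: "lambda_max J > 0" and lr: "phi 0 \<le> lambda_max J * (norm (Om 0))^2"
    using lambda_max_props[OF J] by (auto simp: phi_def)
  have "lambda_max J * (norm (Om 0))^2 < lambda_max J * (2 * kR / lambda_max J * (2 - Psi (R 0) Rd))"
    using O0 lp by (rule mult_strict_left_mono)
  also have "\<dots> = 2 * kR * (2 - Psi (R 0) Rd)" using lp by simp
  also have "\<dots> = 4 * kR * w 0" by (simp add: Psi_eq)
  finally have "phi 0 < 4 * kR * w 0" using lr by linarith
  then show V0: "Vf 0 < 2 * kR" unfolding Vf_def by (simp add: algebra_simps)
  define wm where "wm = 1 - Vf 0 / (2 * kR)"
  have wm0: "wm > 0" unfolding wm_def using V0 kR by (simp add: field_simps)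
  have star: "w T \<ge> wm" if T: "T \<ge> 0" and pos: "\<And>u. 0 \<le> u \<Longrightarrow> u \<le> T \<Longrightarrow> w u > 0" for T
  proof -
    have "2 * kR * (1 - w T) \<le> Vf T" unfolding Vf_def using phi_nonneg[of T] by simp
    also have "\<dots> \<le> Vf 0" by (rule V_decr[OF T pos])
    finally have "2 * kR * (1 - w T) \<le> Vf 0" .
    then have "1 - w T \<le> Vf 0 / (2 * kR)" using kR by (simp add: field_simps)
    then show ?thesis unfolding wm_def by simp
  qed
  show "w t > 0" if t: "t \<ge> 0" for t
  proof (rule ccontr)
    assume "\<not> w t > 0"
    then have wt: "w t \<le> wm / 2" using wm0 by simp
    have w0m: "wm / 2 \<le> w 0" using star[of 0] w0 wm0 by fastforce
    define K where "K = {u \<in> {0..t}. w u = wm / 2}"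
    have "\<exists>x. 0 \<le> x \<and> x \<le> t \<and> w x = wm / 2"
      by (rule IVT2'[OF wt w0m t]) (rule continuous_on_subset[OF contw], auto)
    then have Kne: "K \<noteq> {}" unfolding K_def by auto
    have "closed K" unfolding K_def
      by (rule continuous_closed_preimage_constant) (auto intro: continuous_on_subset[OF contw])
    then have "compact K" unfolding K_def
      by (metis (no_types, lifting) compact_Icc compact_Int_closed inf.absorb_iff2 mem_Collect_eq subsetI)
    then obtain T where TK: "T \<in> K" and Tmin: "\<And>u. u \<in> K \<Longrightarrow> T \<le> u"
      using compact_attains_inf[OF _ Kne] by blast
    have T0: "T \<ge> 0" and wT: "w T = wm / 2" using TK by (auto simp: K_def)
    have pos: "w u > 0" if u: "0 \<le> u" "u \<le> T" for u
    proof (cases "u = T")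
      case True then show ?thesis using wT wm0 by simp
    next
      case False
      then have uT: "u < T" using u by simp
      show ?thesis
      proof (rule ccontr)
        assume "\<not> w u > 0"
        then have wu: "w u \<le> wm / 2" using wm0 by simp
        have "\<exists>x. 0 \<le> x \<and> x \<le> u \<and> w x = wm / 2"
          by (rule IVT2'[OF wu w0m u(1)]) (rule continuous_on_subset[OF contw], auto)
        then obtain x where "0 \<le> x" "x \<le> u" "w x = wm / 2" by blast
        moreover have "T \<le> t" using TK by (simp add: K_def)
        ultimately have "x \<in> K" using uT unfolding K_def by auto
        then have "T \<le> x" by (rule Tmin)
        with \<open>x \<le> u\<close> uT show False by simp
      qed
    qed
    have "w T \<ge> wm" by (rule star[OF T0 pos])
    with wT wm0 show False by simp
  qed
qed

definition "Wf c t = Vf t + c * (v t \<bullet> (J *v Om t))"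

lemma dW: assumes "t \<ge> 0" "tau t > 0"
  shows "(Wf c has_real_derivative (- kO * (norm (Om t))^2 + c * (((1/2) *\<^sub>R (w t *\<^sub>R Om t + cross3 (v t) (Om t))) \<bullet> (J *v Om t)
                 + v t \<bullet> (- cross3 (Om t) (J *v Om t) - kR *\<^sub>R v t - kO *\<^sub>R Om t)))) (at t within {0..})"
proof -
  have d1: "((\<lambda>s. J *v Om s) has_vector_derivative J *v Om' t) (at t within {0..})"
    by (rule bounded_linear.has_vector_derivative[OF matrix_vector_mul_bounded_linear dO[rule_format, OF assms(1)]])
  have "((\<lambda>s. v s \<bullet> (J *v Om s)) has_vector_derivative (v t \<bullet> (J *v Om' t) + ((1/2) *\<^sub>R (w t *\<^sub>R Om t + cross3 (v t) (Om t))) \<bullet> (J *v Om t))) (at t within {0..})"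
    by (rule bounded_bilinear.has_vector_derivative[OF bounded_bilinear_inner dv[OF assms] d1])
  then have d2: "((\<lambda>s. v s \<bullet> (J *v Om s)) has_real_derivative (v t \<bullet> (J *v Om' t) + ((1/2) *\<^sub>R (w t *\<^sub>R Om t + cross3 (v t) (Om t))) \<bullet> (J *v Om t))) (at t within {0..})"
    by (simp add: has_real_derivative_iff_has_vector_derivative)
  have "(Wf c has_real_derivative (- kO * (norm (Om t))^2 + c * (v t \<bullet> (J *v Om' t) + ((1/2) *\<^sub>R (w t *\<^sub>R Om t + cross3 (v t) (Om t))) \<bullet> (J *v Om t)))) (at t within {0..})"
    unfolding Wf_def[abs_def] by (intro DERIV_add DERIV_cmult dV[OF assms] d2)
  then show ?thesis unfolding JOm'[OF assms(1)] by (simp add: algebra_simps)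
qed

lemma phase2:
  fixes K lm c :: real
  assumes K: "K > 0" and JK: "\<And>x. norm (J *v x) \<le> K * norm x"
    and lm: "lm > 0" and Jl: "\<And>x. x \<bullet> (J *v x) \<ge> lm * (norm x)^2"
    and c0: "c > 0" and c1: "c * (2*K + kO^2/(2*kR)) \<le> kO/2" and c2: "c \<le> lm/(2*K)" and c3: "c \<le> kR/K"
    and hpos: "\<And>t. t \<ge> 0 \<Longrightarrow> w t > 0"
    and t: "t \<ge> 0"
  shows "(norm (v t))^2 + (norm (Om t))^2 \<le>
     ((K + 2*kR + c*K) / min (lm/4) (kR/2)) * ((norm (v 0))^2 + (norm (Om 0))^2)
       * exp (- (min (kO/2) (c*kR/2) / (K + 2*kR + c*K)) * t)"
proof -
  define a where "a = min (lm/4) (kR/2)"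
  define b where "b = K + 2*kR + c*K"
  define \<gamma> where "\<gamma> = min (kO/2) (c*kR/2)"
  define \<beta> where "\<beta> = \<gamma> / b"
  define n where "n s = (norm (v s))^2 + (norm (Om s))^2" for s
  have a0: "a > 0" unfolding a_def using lm kR by simp
  have b0: "b > 0" unfolding b_def using K kR c0 by (simp add: add_pos_pos)
  have g0: "\<gamma> > 0" unfolding \<gamma>_def using kO kR c0 by simp
  have PW: "a * n s \<le> Wf c s" "Wf c s \<le> b * n s"
    "(- kO * (norm (Om s))^2 + c * (((1/2) *\<^sub>R (w s *\<^sub>R Om s + cross3 (v s) (Om s))) \<bullet> (J *v Om s)
                 + v s \<bullet> (- cross3 (Om s) (J *v Om s) - kR *\<^sub>R v s - kO *\<^sub>R Om s))) \<le> - \<gamma> * n s"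
    if s: "s \<ge> 0" for s
  proof -
    have ws: "w s > 0" by (rule hpos[OF s])
    have vw: "(norm (v s))^2 + (w s)^2 = 1" by (rule normv[OF s tau_pos[OF ws]])
    note P = pointwise[OF ws vw K JK lm Jl kR kO c0 c1 c2 c3]
    show "a * n s \<le> Wf c s" using P(1) unfolding a_def n_def Wf_def Vf_def phi_def by simp
    show "Wf c s \<le> b * n s" using P(2) unfolding b_def n_def Wf_def Vf_def phi_def by simp
    show "(- kO * (norm (Om s))^2 + c * (((1/2) *\<^sub>R (w s *\<^sub>R Om s + cross3 (v s) (Om s))) \<bullet> (J *v Om s)
                 + v s \<bullet> (- cross3 (Om s) (J *v Om s) - kR *\<^sub>R v s - kO *\<^sub>R Om s))) \<le> - \<gamma> * n s"
      using P(3) unfolding \<gamma>_def n_def by simp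
  qed
  define g where "g s = Wf c s * exp (\<beta> * s)" for s
  have "g t \<le> g 0"
  proof (rule DERIV_nonpos_imp_decreasing_open[OF t])
    fix x assume x: "0 < x" "x < t"
    let ?Wd = "- kO * (norm (Om x))^2 + c * (((1/2) *\<^sub>R (w x *\<^sub>R Om x + cross3 (v x) (Om x))) \<bullet> (J *v Om x)
                 + v x \<bullet> (- cross3 (Om x) (J *v Om x) - kR *\<^sub>R v x - kO *\<^sub>R Om x))"
    have dWx: "(Wf c has_real_derivative ?Wd) (at x)"
      using dW[of x c] x hpos[of x] tau_pos at_int[OF x(1)] by simp
    have E: "((\<lambda>s. exp (\<beta> * s)) has_real_derivative exp (\<beta> * x) * (\<beta> * 1)) (at x)"
      by (rule DERIV_chain2[OF DERIV_exp DERIV_cmult[OF DERIV_ident]])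
    have dg0: "(g has_real_derivative (?Wd * exp (\<beta> * x) + exp (\<beta> * x) * (\<beta> * 1) * Wf c x)) (at x)"
      unfolding g_def[abs_def] by (rule DERIV_mult[OF dWx E])
    have eqd: "?Wd * exp (\<beta> * x) + exp (\<beta> * x) * (\<beta> * 1) * Wf c x = (?Wd + \<beta> * Wf c x) * exp (\<beta> * x)"
      by (simp add: algebra_simps)
    have dg: "(g has_real_derivative ((?Wd + \<beta> * Wf c x) * exp (\<beta> * x))) (at x)"
      using dg0 unfolding eqd .
    moreover have "?Wd + \<beta> * Wf c x \<le> 0"
    proof -
      have "\<beta> * Wf c x \<le> \<beta> * (b * n x)" using PW(2)[of x] x g0 b0
        by (intro mult_left_mono) (auto simp: \<beta>_def)
      also have "\<dots> = \<gamma> * n x" using b0 by (simp add: \<beta>_def)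
      finally show ?thesis using PW(3)[of x] x by simp
    qed
    then have "(?Wd + \<beta> * Wf c x) * exp (\<beta> * x) \<le> 0"
      by (simp add: mult_nonpos_nonneg)
    then show "\<exists>y. (g has_real_derivative y) (at x) \<and> y \<le> 0" using dg by blast
  next
    have cW: "continuous_on {0..} (Wf c)"
    proof -
      have "continuous_on {0..} v"
        by (rule continuous_on_vector_derivative) (use dv hpos tau_pos in auto)
      moreover have "continuous_on {0..} (\<lambda>t. J *v Om t)"
        by (rule linear_continuous_on_compose[OF contOm]) simp
      ultimately show ?thesis unfolding Wf_def[abs_def] by (intro continuous_intros contV)
    qed
    show "continuous_on {0..t} g" unfolding g_def[abs_def]
      by (intro continuous_intros continuous_on_subset[OF cW]) auto
  qed
  then have "Wf c t * exp (\<beta> * t) \<le> Wf c 0" by (simp add: g_def)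
  then have "Wf c t \<le> Wf c 0 * exp (- \<beta> * t)"
    by (simp add: exp_minus field_simps)
  then have "a * n t \<le> b * n 0 * exp (- \<beta> * t)"
    using PW(1)[OF t] PW(2)[of 0] by (smt (verit) exp_gt_zero mult_right_mono)
  then have "n t \<le> (b / a) * n 0 * exp (- \<beta> * t)"
    using a0 by (simp add: field_simps)
  then show ?thesis unfolding n_def a_def b_def \<beta>_def \<gamma>_def .
qed

end

lemma lm_exists:
  fixes J :: "real^3^3"
  assumes J: "sym_posdef J"
  shows "\<exists>lm>0. \<forall>x. x \<bullet> (J *v x) \<ge> lm * (norm x)^2"
proof -
  have pd: "\<And>x. x \<noteq> 0 \<Longrightarrow> x \<bullet> (J *v x) > 0" using J by (auto simp: sym_posdef_def)
  have "\<exists>u\<in>sphere (0::real^3) 1. \<forall>y\<in>sphere 0 1. u \<bullet> (J *v u) \<le> y \<bullet> (J *v y)"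
    by (rule continuous_attains_inf) (auto intro!: continuous_intros)
  then obtain u where u1: "norm u = 1" and umin: "\<And>y. norm y = 1 \<Longrightarrow> u \<bullet> (J *v u) \<le> y \<bullet> (J *v y)"
    by auto
  define lm where "lm = u \<bullet> (J *v u)"
  have "u \<noteq> 0" using u1 by auto
  then have lm0: "lm > 0" unfolding lm_def using pd by simp
  have "x \<bullet> (J *v x) \<ge> lm * (norm x)^2" for x
  proof (cases "x = 0")
    case True then show ?thesis by simp
  next
    case False
    then have n: "norm x > 0" by simp
    have "lm \<le> (x /\<^sub>R norm x) \<bullet> (J *v (x /\<^sub>R norm x))" unfolding lm_def
      using umin[of "x /\<^sub>R norm x"] n by simp
    then have "lm \<le> (x \<bullet> (J *v x)) / (norm x)^2"
      by (simp add: matrix_vector_mult_scaleR power2_eq_square divide_inverse ac_simps)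
    then show ?thesis using n by (simp add: le_divide_eq mult.commute)
  qed
  then show ?thesis using lm0 by blast
qed

theorem proposition4:
  fixes J Rd :: "real^3^3" and kR kO :: real
  assumes J: "sym_posdef J"
    and Rd: "Rd \<in> SO3"
    and kR: "kR > 0" and kO: "kO > 0"
  shows "\<exists>C \<beta>. C > 0 \<and> \<beta> > 0 \<and>
    (\<forall>(R :: real \<Rightarrow> real^3^3) (\<Omega> :: real \<Rightarrow> real^3) (\<Omega>' :: real \<Rightarrow> real^3).
      R 0 \<in> SO3 \<longrightarrow>
      (\<forall>t\<ge>0. (R has_vector_derivative (R t ** hat (\<Omega> t))) (at t within {0..})) \<longrightarrow>
      (\<forall>t\<ge>0. (\<Omega> has_vector_derivative \<Omega>' t) (at t within {0..})) \<longrightarrow>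
      (\<forall>t\<ge>0. J *v \<Omega>' t + cross3 (\<Omega> t) (J *v \<Omega> t)
               = - kR *\<^sub>R eR (R t) Rd - kO *\<^sub>R eOmega (R t) Rd (\<Omega> t) 0) \<longrightarrow>
      Psi (R 0) Rd < 2 \<longrightarrow>
      (norm (\<Omega> 0))\<^sup>2 < 2 * kR / lambda_max J * (2 - Psi (R 0) Rd) \<longrightarrow>
      (\<forall>t\<ge>0. Psi (R t) Rd < 2 \<and>
         (norm (eR (R t) Rd))\<^sup>2 + (norm (eOmega (R t) Rd (\<Omega> t) 0))\<^sup>2
           \<le> C * ((norm (eR (R 0) Rd))\<^sup>2 + (norm (eOmega (R 0) Rd (\<Omega> 0) 0))\<^sup>2)
               * exp (- \<beta> * t)))"
proof -
  obtain K where K: "K > 0" and JK0: "\<And>x. norm (J *v x) \<le> norm x * K"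
    using bounded_linear.pos_bounded[OF matrix_vector_mul_bounded_linear[of J]] by blast
  have JK: "\<And>x. norm (J *v x) \<le> K * norm x" using JK0 by (simp add: mult.commute)
  obtain lm where lm: "lm > 0" and Jl: "\<And>x. x \<bullet> (J *v x) \<ge> lm * (norm x)^2"
    using lm_exists[OF J] by blast
  define D where "D = 2*K + kO^2/(2*kR)"
  have D0: "D > 0" unfolding D_def using K kR by (simp add: add_pos_nonneg)
  define c where "c = min (kO / (2 * D)) (min (lm/(2*K)) (kR/K))"
  have c0: "c > 0" unfolding c_def using kO D0 lm K kR by simp
  have c1: "c * (2*K + kO^2/(2*kR)) \<le> kO/2"
  proof -
    have "c \<le> kO / (2 * D)" unfolding c_def by simp
    then have "c * D \<le> kO / (2 * D) * D" using D0 by (intro mult_right_mono) auto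
    also have "\<dots> = kO / 2" using D0 by simp
    finally show ?thesis unfolding D_def .
  qed
  have c2: "c \<le> lm/(2*K)" and c3: "c \<le> kR/K" unfolding c_def by simp_all
  define a where "a = min (lm/4) (kR/2)"
  define b where "b = K + 2*kR + c*K"
  define \<gamma> where "\<gamma> = min (kO/2) (c*kR/2)"
  have a0: "a > 0" unfolding a_def using lm kR by simp
  have b0: "b > 0" unfolding b_def using K kR c0 by (simp add: add_pos_pos)
  have g0: "\<gamma> > 0" unfolding \<gamma>_def using kO kR c0 by simp
  show ?thesis
  proof (intro exI conjI allI impI)
    show "b / a > 0" using a0 b0 by simp
    show "\<gamma> / b > 0" using g0 b0 by simp
    fix R :: "real \<Rightarrow> real^3^3" and \<Omega> \<Omega>' :: "real \<Rightarrow> real^3" and t :: real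
    assume R0: "R 0 \<in> SO3"
      and dR: "\<forall>t\<ge>0. (R has_vector_derivative (R t ** hat (\<Omega> t))) (at t within {0..})"
      and dO: "\<forall>t\<ge>0. (\<Omega> has_vector_derivative \<Omega>' t) (at t within {0..})"
      and eq: "\<forall>t\<ge>0. J *v \<Omega>' t + cross3 (\<Omega> t) (J *v \<Omega> t)
               = - kR *\<^sub>R eR (R t) Rd - kO *\<^sub>R eOmega (R t) Rd (\<Omega> t) 0"
      and P0: "Psi (R 0) Rd < 2"
      and O0: "(norm (\<Omega> 0))\<^sup>2 < 2 * kR / lambda_max J * (2 - Psi (R 0) Rd)"
      and t: "t \<ge> 0"
    interpret tr: traj J Rd kR kO R \<Omega> \<Omega>'
      by unfold_locales (use J Rd kR kO R0 dR dO eq in auto)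
    have hpos: "\<And>s. s \<ge> 0 \<Longrightarrow> tr.w s > 0" using tr.phase1(2)[OF P0 O0] .
    show "Psi (R t) Rd < 2" using hpos[OF t] by (simp add: tr.Psi_eq)
    have "(norm (tr.v t))^2 + (norm (\<Omega> t))^2 \<le>
     (b / a) * ((norm (tr.v 0))^2 + (norm (\<Omega> 0))^2) * exp (- (\<gamma> / b) * t)"
      using tr.phase2[OF K JK lm Jl c0 c1 c2 c3 hpos t] unfolding a_def b_def \<gamma>_def .
    then show "(norm (eR (R t) Rd))\<^sup>2 + (norm (eOmega (R t) Rd (\<Omega> t) 0))\<^sup>2
           \<le> b / a * ((norm (eR (R 0) Rd))\<^sup>2 + (norm (eOmega (R 0) Rd (\<Omega> 0) 0))\<^sup>2)
               * exp (- (\<gamma> / b) * t)"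
      by (simp add: tr.v_def tr.eOm)
  qed
qed

end
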